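(* Let $H:\mathbb{C}^{n_1\times\dots\times n_d}\to\mathbb{C}^{n_1\times\dots\times n_d}$ be linear and self-adjoint ($\langle H[Y],Z\rangle=\langle Y,H[Z]\rangle$ for all $Y,Z$), and let $\mathrm{E}(Y)=\langle Y,H[Y]\rangle$. Run the rank-augmenting TTN integrator (described in the context) on the maximal tree $\bar\tau$ with an orthonormal starting TTN $Y_{\bar\tau}^0$ of full tree rank and the function $F(t,Y)=-\mathrm{i}\,H[Y]$ (the tensor Schrödinger equation $\mathrm{i}\dot A=H[A]$), over a step $t_0<t_1$ of arbitrary step size $h=t_1-t_0$. Then the rank-augmented result $\widehat Y_{\bar\tau}^1$ satisfies $\mathrm{E}(\widehat Y_{\bar\tau}^1)=\mathrm{E}(Y_{\bar\tau}^0)$.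
   Context: Tensor notation: for a tensor with modes indexed $0,1,\dots,m$, $\mathrm{mat}_i$ is the mode-$i$ matricization (rows indexed by the $i$th index) and $\mathrm{ten}_i$ its inverse; $A\times_i\mathbf{B}$ is the mode-$i$ product, $\mathrm{mat}_i(A\times_i\mathbf{B})=\mathbf{B}\,\mathrm{mat}_i(A)$; $\times_{i=1}^m$ denotes successive products in modes $1,\dots,m$; ${}^*$ is conjugate transpose; $\|\cdot\|$ and $\langle X,Y\rangle=\sum \overline{x}\,y$ are the Euclidean norm and inner product of the vectors of entries. Trees: given a finite leaf set $\mathcal{L}=\{1,\dots,d\}$, each leaf $l$ is a tree with leaf set $\{l\}$; if $\tau_1,\dots,\tau_m$ ($m\ge2$) are trees with pairwise disjoint leaf sets, the ordered tuple $\tau=(\tau_1,\dots,\tau_m)$ is a tree whose leaf set is their union; the $\tau_i$ are its direct subtrees, and subtrees are defined recursively ($\sigma\le\tau$, $\sigma<\tau$ if also $\sigma\ne\tau$). Fix a tree $\bar\tau$ with leaf set $\mathcal{L}$. Tree tensor networks (TTN): given dimensions $n_l$ and ranks $r_\sigma$ ($\sigma\le\bar\tau$, $r_{\bar\tau}=1$), basis matrices $\mathbf{U}_l\in\mathbb{C}^{n_l\times r_l}$ at leaves and connection tensors $C_\tau\in\mathbb{C}^{r_\tau\times r_{\tau_1}\times\dots\times r_{\tau_m}}$ of full multilinear rank at non-leaf subtrees $\tau=(\tau_1,\dots,\tau_m)$, set $X_l=\mathbf{U}_l^\top$, $X_\tau=C_\tau\times_0\mathbf{I}_{r_\tau}\times_{i=1}^m\mathbf{U}_{\tau_i}\in\mathcal{V}_\tau:=\mathbb{C}^{r_\tau\times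 n_{\tau_1}\times\dots\times n_{\tau_m}}$ with $n_\tau=\prod_i n_{\tau_i}$, and $\mathbf{U}_\tau=\mathrm{mat}_0(X_\tau)^\top\in\mathbb{C}^{n_\tau\times r_\tau}$; for a leaf, $\mathcal{V}_l:=\mathbb{C}^{r_l\times n_l}$. The TTN is orthonormal if every $\mathbf{U}_\sigma$, $\sigma<\bar\tau$, has orthonormal columns. Full tree rank means all connection tensors have full multilinear rank. $\mathcal{V}_{\bar\tau}$ is identified with $\mathbb{C}^{n_1\times\dots\times n_d}$. Reduced operators and starting values: for a non-leaf $\tau=(\tau_1,\dots,\tau_m)$, a function $F_\tau:[t_0,t_1]\times\mathcal{V}_\tau\to\mathcal{V}_\tau$ and a starting TTN $Y_\tau^0=C_\tau^0\times_0\mathbf{I}_{r_\tau}\times_{i=1}^m\mathbf{U}_{\tau_i}^0$ with $\mathbf{U}_{\tau_i}^0=\mathrm{mat}_0(X_{\tau_i}^0)^\top$, compute QR decompositions $\mathrm{mat}_i(C_\tau^0)^\top=\mathbf{Q}_{\tau_i}^0\mathbf{S}_{\tau_i}^{0,\top}$, let $\mathbf{V}_{\tau_i}^0=\mathrm{mat}_i\big(\mathrm{ten}_i(\mathbf{Q}_{\tau_i}^{0,\top})\times_0\mathbf{I}_{r_\tau}\times_{j\ne i}\mathbf{U}_{\tau_j}^0\big)^\top$, prolongation $\pi_{\tau,i}(Y)=\mathrm{ten}_i\big((\mathbf{V}_{\tau_i}^0\mathrm{mat}_0(Y))^\top\big)$ for $Y\in\mathcal{V}_{\tau_i}$, restriction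 $\pi_{\tau,i}^\dagger(Z)=\mathrm{ten}_0\big((\mathrm{mat}_i(Z)\mathbf{V}_{\tau_i}^0)^\top\big)$ for $Z\in\mathcal{V}_\tau$, and set $F_{\tau_i}(t,Y)=\pi_{\tau,i}^\dagger(F_\tau(t,\pi_{\tau,i}(Y)))$ and $Y_{\tau_i}^0=X_{\tau_i}^0\times_0\mathbf{S}_{\tau_i}^{0,\top}$. Rank-augmenting TTN integrator on $(\tau,Y_\tau^0,F_\tau,t_0,t_1)$, $\tau$ non-leaf: (1) for each $i$: if $\tau_i=l$ is a leaf, solve $\dot Y_l=F_l(t,Y_l)$, $Y_l(t_0)=Y_l^0$, let $\widehat{\mathbf{U}}_l$ have orthonormal columns spanning the range of $(Y_l(t_1)^\top,\mathbf{U}_l^0)$, and $\widehat{\mathbf{M}}_l=\widehat{\mathbf{U}}_l^*\mathbf{U}_l^0$; otherwise call the integrator recursively on $(\tau_i,Y_{\tau_i}^0,F_{\tau_i},t_0,t_1)$, obtaining $\widehat Y_{\tau_i}^1$ (with root connection tensor $\widehat C_{\tau_i}^1$) and $\widehat C_{\tau_i}^0$, let $\widehat{\mathbf{Q}}_{\tau_i}$ have orthonormal columns spanning the range of $(\mathrm{mat}_0(\widehat C_{\tau_i}^1)^\top,\mathrm{mat}_0(\widehat C_{\tau_i}^0)^\top)$, let $\widehat X_{\tau_i}$ be $\widehat Y_{\tau_i}^1$ with root connection tensor replaced by $\mathrm{ten}_0(\widehat{\mathbf{Q}}_{\tau_i}^\top)$, and set $\widehat{\mathbf{U}}_{\tau_i}=\mathrm{mat}_0(\widehat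 X_{\tau_i})^\top$, $\widehat{\mathbf{M}}_{\tau_i}=\widehat{\mathbf{U}}_{\tau_i}^*\mathbf{U}_{\tau_i}^0$. (2) Set $\widehat C_\tau^0=C_\tau^0\times_{i=1}^m\widehat{\mathbf{M}}_{\tau_i}$, solve $\dot{\widehat C}_\tau(t)=F_\tau\big(t,\widehat C_\tau(t)\times_0\mathbf{I}_{r_\tau}\times_{i=1}^m\widehat{\mathbf{U}}_{\tau_i}\big)\times_{i=1}^m\widehat{\mathbf{U}}_{\tau_i}^*$, $\widehat C_\tau(t_0)=\widehat C_\tau^0$, set $\widehat C_\tau^1=\widehat C_\tau(t_1)$, and return $\widehat Y_\tau^1=\widehat C_\tau^1\times_0\mathbf{I}_{r_\tau}\times_{i=1}^m\widehat{\mathbf{U}}_{\tau_i}$ and $\widehat C_\tau^0$. At the top level, $F_{\bar\tau}=F$ and $Y_{\bar\tau}^0$ is the given starting TTN. All differential equations are assumed to be solved exactly. *)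

theory Defs
  imports "HOL-Analysis.Analysis" "HOL-Library.FuncSet"
begin

datatype tree = Leaf nat | Node "tree list"

fun leaves :: "tree \<Rightarrow> nat set" where
  "leaves (Leaf l) = {l}"
| "leaves (Node cs) = \<Union> (set (map leaves cs))"

fun wf_tree :: "tree \<Rightarrow> bool" where
  "wf_tree (Leaf l) = True"
| "wf_tree (Node cs) = (2 \<le> length cs
      \<and> (\<forall>i<length cs. \<forall>j<length cs. i \<noteq> j \<longrightarrow> leaves (cs!i) \<inter> leaves (cs!j) = {})
      \<and> list_all wf_tree cs)"

fun subtrees :: "tree \<Rightarrow> tree set" where
  "subtrees (Leaf l) = {Leaf l}"
| "subtrees (Node cs) = insert (Node cs) (\<Union> (set (map subtrees cs)))"

text \<open>Multi-indices are functions from mode labels to indices (extensional: undefined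
 outside the label set).  An element of V_tau (or a connection tensor) is a function
 of the mode-0 index and a multi-index over the remaining modes.  For V_tau the remaining
 modes are labelled by the leaves of tau (so n_tau is never flattened); for connection
 tensors they are labelled by child positions 0..m-1.\<close>

type_synonym midx = "nat \<Rightarrow> nat"
type_synonym gten = "nat \<Rightarrow> midx \<Rightarrow> complex"

definition MI :: "(nat \<Rightarrow> nat) \<Rightarrow> nat set \<Rightarrow> midx set" where
  "MI dims L = Pi\<^sub>E L (\<lambda>l. {..<dims l})"

text \<open>C x_0 I x_{i=1..m} U_i, where the i-th basis is given in transposed form X_i
 (X_i c a = U_i(a,c)), Ls!i the leaf set of the i-th child, rs!i its rank.\<close>
definition comb :: "gten \<Rightarrow> gten list \<Rightarrow> nat list \<Rightarrow> nat set list \<Rightarrow> gten" where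
  "comb C Xs rs Ls = (\<lambda>k a. \<Sum>c\<in>MI (\<lambda>i. rs!i) {..<length Xs}.
       C k c * (\<Prod>i<length Xs. (Xs!i) (c i) (restrict a (Ls!i))))"

text \<open>C x_{i=1..m} M_i with matrices M_i (row, column).\<close>
definition cmult :: "gten \<Rightarrow> (nat \<Rightarrow> nat \<Rightarrow> complex) list \<Rightarrow> nat list \<Rightarrow> gten" where
  "cmult C Ms rs = (\<lambda>k c'. \<Sum>c\<in>MI (\<lambda>i. rs!i) {..<length rs}.
       C k c * (\<Prod>i<length rs. (Ms!i) (c' i) (c i)))"

text \<open>Z x_{i=1..m} U_i^* for Z in V_tau.\<close>
definition proj :: "(nat \<Rightarrow> nat) \<Rightarrow> gten \<Rightarrow> gten list \<Rightarrow> nat set list \<Rightarrow> gten" where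
  "proj n Z Xs Ls = (\<lambda>k c'. \<Sum>a\<in>MI n (\<Union>(set Ls)).
       Z k a * (\<Prod>i<length Xs. cnj ((Xs!i) (c' i) (restrict a (Ls!i)))))"

text \<open>Y x_0 S^T (S a q x q matrix).\<close>
definition sred :: "(nat \<Rightarrow> nat \<Rightarrow> complex) \<Rightarrow> nat \<Rightarrow> gten \<Rightarrow> gten" where
  "sred S q X = (\<lambda>s b. \<Sum>s'<q. S s' s * X s' b)"

text \<open>The matrix U^* W, both given in transposed form over multi-indices M.\<close>
definition mhat :: "midx set \<Rightarrow> gten \<Rightarrow> gten \<Rightarrow> nat \<Rightarrow> nat \<Rightarrow> complex" where
  "mhat M Xh X0 = (\<lambda>c' c. \<Sum>a\<in>M. cnj (Xh c' a) * X0 c a)"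

definition orth :: "midx set \<Rightarrow> gten \<Rightarrow> nat \<Rightarrow> bool" where
  "orth M A p = (\<forall>c<p. \<forall>c'<p. (\<Sum>a\<in>M. cnj (A c a) * A c' a) = (if c = c' then 1 else 0))"

definition cols_span_eq :: "midx set \<Rightarrow> gten \<Rightarrow> nat \<Rightarrow> gten \<Rightarrow> nat \<Rightarrow> bool" where
  "cols_span_eq M A p B q =
     ((\<forall>x. \<exists>y. \<forall>a\<in>M. (\<Sum>c<p. x c * A c a) = (\<Sum>c<q. y c * B c a)) \<and>
      (\<forall>y. \<exists>x. \<forall>a\<in>M. (\<Sum>c<p. x c * A c a) = (\<Sum>c<q. y c * B c a)))"

definition join :: "gten \<Rightarrow> gten \<Rightarrow> nat \<Rightarrow> gten" where
  "join A B q = (\<lambda>c. if c < q then A c else B (c - q))"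

text \<open>Full multilinear rank of a connection tensor (r_tau x rs!0 x ... ): every
 matricization has linearly independent rows.\<close>
definition full_mlrank :: "gten \<Rightarrow> nat \<Rightarrow> nat list \<Rightarrow> bool" where
  "full_mlrank C rt rs =
     ((\<forall>x. (\<forall>c\<in>MI (\<lambda>i. rs!i) {..<length rs}. (\<Sum>k<rt. x k * C k c) = 0)
            \<longrightarrow> (\<forall>k<rt. x k = 0)) \<and>
      (\<forall>i<length rs. \<forall>x. (\<forall>k<rt. \<forall>c\<in>MI (\<lambda>i. rs!i) {..<length rs}.
            (\<Sum>s<rs!i. x s * C k (c(i:=s))) = 0) \<longrightarrow> (\<forall>s<rs!i. x s = 0)))"

definition solves :: "(real \<Rightarrow> gten) \<Rightarrow> (real \<Rightarrow> gten \<Rightarrow> gten) \<Rightarrow> real \<Rightarrow> real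
      \<Rightarrow> gten \<Rightarrow> nat \<Rightarrow> midx set \<Rightarrow> bool" where
  "solves Y F t0 t1 Y0 q M =
     ((\<forall>k<q. \<forall>a\<in>M. Y t0 k a = Y0 k a) \<and>
      (\<forall>t\<in>{t0..t1}. \<forall>k<q. \<forall>a\<in>M.
          ((\<lambda>s. Y s k a) has_vector_derivative F t (Y t) k a) (at t within {t0..t1})))"

text \<open>X_sigma of a TTN with leaf bases U_l (n_l x r_l matrices, row, column),
 connection tensors Cn and ranks r.\<close>
fun X0 :: "(tree \<Rightarrow> gten) \<Rightarrow> (nat \<Rightarrow> nat \<Rightarrow> nat \<Rightarrow> complex) \<Rightarrow> (tree \<Rightarrow> nat) \<Rightarrow> tree \<Rightarrow> gten" where
  "X0 Cn Ul r (Leaf l) = (\<lambda>k a. Ul l (a l) k)"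
| "X0 Cn Ul r (Node cs) = comb (Cn (Node cs)) (map (X0 Cn Ul r) cs) (map r cs) (map leaves cs)"

text \<open>QR decomposition mat_i(C)^T = Q S^T, with Q stored as the tensor ten_i(Q^T)
 (same shape as C) and S^T upper triangular.\<close>
definition qr_cond :: "nat \<Rightarrow> nat list \<Rightarrow> gten \<Rightarrow> nat \<Rightarrow> gten \<Rightarrow> (nat \<Rightarrow> nat \<Rightarrow> complex) \<Rightarrow> bool" where
  "qr_cond rt rs C i Qt S =
     ((\<forall>k<rt. \<forall>c\<in>MI (\<lambda>j. rs!j) {..<length rs}.
          C k c = (\<Sum>s<rs!i. Qt k (c(i:=s)) * S (c i) s)) \<and>
      (\<forall>p<rs!i. \<forall>q<rs!i. p < q \<longrightarrow> S p q = 0) \<and>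
      (\<forall>s<rs!i. \<forall>s'<rs!i.
          (\<Sum>k<rt. \<Sum>c\<in>{c\<in>MI (\<lambda>j. rs!j) {..<length rs}. c i = s}.
              cnj (Qt k c) * Qt k (c(i:=s'))) = (if s = s' then 1 else 0)))"

text \<open>The matrix V_{tau_i}^0, as function of (k, a) (row, a multi-index over the leaves
 of tau of which only the part outside tau_i matters) and s (column).\<close>
definition Vq :: "nat list \<Rightarrow> gten list \<Rightarrow> nat set list \<Rightarrow> gten \<Rightarrow> nat \<Rightarrow> nat \<Rightarrow> midx \<Rightarrow> nat \<Rightarrow> complex" where
  "Vq rs X0s Ls Qt i k a s = (\<Sum>c\<in>{c\<in>MI (\<lambda>j. rs!j) {..<length rs}. c i = s}.
       Qt k c * (\<Prod>j\<in>{..<length rs} - {i}. (X0s!j) (c j) (restrict a (Ls!j))))"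

definition prol :: "nat list \<Rightarrow> gten list \<Rightarrow> nat set list \<Rightarrow> gten \<Rightarrow> nat \<Rightarrow> gten \<Rightarrow> gten" where
  "prol rs X0s Ls Qt i Y = (\<lambda>k a. \<Sum>s<rs!i. Vq rs X0s Ls Qt i k a s * Y s (restrict a (Ls!i)))"

definition merge :: "nat set \<Rightarrow> midx \<Rightarrow> midx \<Rightarrow> midx" where
  "merge L b a' = (\<lambda>l. if l \<in> L then b l else a' l)"

definition restr :: "(nat \<Rightarrow> nat) \<Rightarrow> nat \<Rightarrow> nat list \<Rightarrow> gten list \<Rightarrow> nat set list \<Rightarrow> gten \<Rightarrow> nat \<Rightarrow> gten \<Rightarrow> gten" where
  "restr n rt rs X0s Ls Qt i Z = (\<lambda>s b. \<Sum>k<rt. \<Sum>a'\<in>MI n (\<Union>(set Ls) - Ls!i).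
       Z k (merge (Ls!i) b a') * Vq rs X0s Ls Qt i k (merge (Ls!i) b a') s)"

definition redF :: "(nat \<Rightarrow> nat) \<Rightarrow> nat \<Rightarrow> nat list \<Rightarrow> gten list \<Rightarrow> nat set list \<Rightarrow> gten \<Rightarrow> nat
      \<Rightarrow> (real \<Rightarrow> gten \<Rightarrow> gten) \<Rightarrow> real \<Rightarrow> gten \<Rightarrow> gten" where
  "redF n rt rs X0s Ls Qt i F = (\<lambda>t Y. restr n rt rs X0s Ls Qt i (F t (prol rs X0s Ls Qt i Y)))"

text \<open>integ n Cn Ul r t0 t1 tau C F C1 C0 Xh rh: a run of the integrator on
 (tau, Y_tau^0, F_tau, t0, t1), where Y_tau^0 has root connection tensor C and the
 subtree bases of the original TTN below; it returns the root connection tensors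
 C1 (of Y-hat^1_tau) and C0 (= C-hat^0_tau), the augmented child bases Xh!i
 (transposed: Xh!i c a = U-hat_{tau_i}(a,c)) and the augmented ranks rh!i.
 The choices of orthonormal bases and QR factors are arbitrary.\<close>
inductive integ :: "(nat \<Rightarrow> nat) \<Rightarrow> (tree \<Rightarrow> gten) \<Rightarrow> (nat \<Rightarrow> nat \<Rightarrow> nat \<Rightarrow> complex)
    \<Rightarrow> (tree \<Rightarrow> nat) \<Rightarrow> real \<Rightarrow> real \<Rightarrow> tree \<Rightarrow> gten \<Rightarrow> (real \<Rightarrow> gten \<Rightarrow> gten)
    \<Rightarrow> gten \<Rightarrow> gten \<Rightarrow> gten list \<Rightarrow> nat list \<Rightarrow> bool"
  for n Cn Ul r t0 t1 where
  step: "\<lbrakk> length Xh = length cs; length rh = length cs;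
     \<forall>i<length cs. \<exists>Qt S.
        qr_cond (r (Node cs)) (map r cs) C i Qt S \<and>
        (\<forall>l. cs!i = Leaf l \<longrightarrow>
           (\<exists>Y. solves Y (redF n (r (Node cs)) (map r cs) (map (X0 Cn Ul r) cs) (map leaves cs) Qt i F)
                   t0 t1 (sred S (r (cs!i)) (X0 Cn Ul r (cs!i))) (r (cs!i)) (MI n {l})
             \<and> orth (MI n {l}) (Xh!i) (rh!i)
             \<and> cols_span_eq (MI n {l}) (Xh!i) (rh!i)
                  (join (Y t1) (X0 Cn Ul r (cs!i)) (r (cs!i))) (2 * r (cs!i)))) \<and>
        (\<forall>cs'. cs!i = Node cs' \<longrightarrow>
           (\<exists>C1' C0' Xs' rs' Qh.
              integ n Cn Ul r t0 t1 (cs!i) (sred S (r (cs!i)) (Cn (cs!i)))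
                 (redF n (r (Node cs)) (map r cs) (map (X0 Cn Ul r) cs) (map leaves cs) Qt i F)
                 C1' C0' Xs' rs'
            \<and> orth (MI (\<lambda>j. rs'!j) {..<length cs'}) Qh (rh!i)
            \<and> cols_span_eq (MI (\<lambda>j. rs'!j) {..<length cs'}) Qh (rh!i)
                 (join C1' C0' (r (cs!i))) (2 * r (cs!i))
            \<and> Xh!i = comb Qh Xs' rs' (map leaves cs')));
     C0 = cmult C (map (\<lambda>i. mhat (MI n (leaves (cs!i))) (Xh!i) (X0 Cn Ul r (cs!i))) [0..<length cs])
                (map r cs);
     solves Ch (\<lambda>t Cc. proj n (F t (comb Cc Xh rh (map leaves cs))) Xh (map leaves cs))
        t0 t1 C0 (r (Node cs)) (MI (\<lambda>i. rh!i) {..<length cs});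
     C1 = Ch t1 \<rbrakk>
   \<Longrightarrow> integ n Cn Ul r t0 t1 (Node cs) C F C1 C0 Xh rh"

definition inner_on :: "midx set \<Rightarrow> (midx \<Rightarrow> complex) \<Rightarrow> (midx \<Rightarrow> complex) \<Rightarrow> complex" where
  "inner_on M Y Z = (\<Sum>a\<in>M. cnj (Y a) * Z a)"

definition energy :: "midx set \<Rightarrow> ((midx \<Rightarrow> complex) \<Rightarrow> (midx \<Rightarrow> complex)) \<Rightarrow> (midx \<Rightarrow> complex) \<Rightarrow> complex" where
  "energy M H Y = inner_on M Y (H Y)"

end

theory Submission
  imports Defs "Jordan_Normal_Form.Determinant"
begin


lemma MI_restrict:
  assumes "a \<in> MI n L" "L' \<subseteq> L" shows "restrict a L' \<in> MI n L'"
  using assms unfolding MI_def by auto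

lemma finite_MI: "finite L \<Longrightarrow> finite (MI n L)"
  unfolding MI_def by (auto intro!: finite_PiE)

lemma sum_MI_split:
  fixes n :: "nat \<Rightarrow> nat" and Ls :: "nat set list" and g :: "nat \<Rightarrow> midx \<Rightarrow> complex"
  assumes disj: "\<forall>i<length Ls. \<forall>j<length Ls. i \<noteq> j \<longrightarrow> Ls!i \<inter> Ls!j = {}"
    and fin: "\<forall>i<length Ls. finite (Ls!i)"
  shows "(\<Sum>a\<in>MI n (\<Union>(set Ls)). \<Prod>i<length Ls. g i (restrict a (Ls!i)))
       = (\<Prod>i<length Ls. \<Sum>b\<in>MI n (Ls!i). g i b)"
proof -
  define m where "m = length Ls"
  define psi where "psi a = (\<lambda>i\<in>{..<m}. restrict a (Ls!i))" for a :: midx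
  have bij: "bij_betw psi (MI n (\<Union>(set Ls))) (PiE {..<m} (\<lambda>i. MI n (Ls!i)))"
  proof (rule bij_betw_imageI)
    show "inj_on psi (MI n (\<Union>(set Ls)))"
    proof (rule inj_onI)
      fix a a' assume a: "a \<in> MI n (\<Union>(set Ls))" and a': "a' \<in> MI n (\<Union>(set Ls))" and eq: "psi a = psi a'"
      show "a = a'"
      proof
        fix l
        show "a l = a' l"
        proof (cases "l \<in> \<Union>(set Ls)")
          case True
          then obtain i where i: "i < m" "l \<in> Ls!i" unfolding m_def by (auto simp: in_set_conv_nth)
          have "psi a i l = psi a' i l" using eq by simp
          then show ?thesis using i unfolding psi_def by simp
        next
          case False
          then show ?thesis using a a' unfolding MI_def by (auto simp: PiE_def extensional_def)
        qed
      qed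
    qed
    show "psi ` MI n (\<Union>(set Ls)) = PiE {..<m} (\<lambda>i. MI n (Ls!i))"
    proof
      show "psi ` MI n (\<Union>(set Ls)) \<subseteq> PiE {..<m} (\<lambda>i. MI n (Ls!i))"
      proof
        fix a assume a: "a \<in> psi ` MI n (\<Union>(set Ls))"
        have sub: "Ls!i \<subseteq> \<Union>(set Ls)" if "i < length Ls" for i
          using that by (simp add: Union_upper)
        show "a \<in> PiE {..<m} (\<lambda>i. MI n (Ls!i))"
          using a unfolding psi_def m_def by (auto intro!: MI_restrict sub)
      qed
      show "PiE {..<m} (\<lambda>i. MI n (Ls!i)) \<subseteq> psi ` MI n (\<Union>(set Ls))"
      proof
        fix beta assume beta: "beta \<in> PiE {..<m} (\<lambda>i. MI n (Ls!i))"
        define a where "a l = (if \<exists>i<m. l \<in> Ls!i then beta (SOME i. i < m \<and> l \<in> Ls!i) l else undefined)" for l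
        have key: "a l = beta i l" if "i < m" "l \<in> Ls!i" for i l
        proof -
          have ex: "\<exists>i<m. l \<in> Ls!i" using that by blast
          let ?j = "SOME i. i < m \<and> l \<in> Ls!i"
          have j: "?j < m \<and> l \<in> Ls!?j" using someI_ex[OF ex] .
          then have "?j = i" using disj that unfolding m_def by blast
          then show ?thesis unfolding a_def using ex by simp
        qed
        have aMI: "a \<in> MI n (\<Union>(set Ls))"
          unfolding MI_def
        proof (rule PiE_I)
          fix l assume "l \<in> \<Union>(set Ls)"
          then obtain i where i: "i < m" "l \<in> Ls!i" unfolding m_def by (auto simp: in_set_conv_nth)
          have "beta i \<in> MI n (Ls!i)" using beta i by auto
          then show "a l \<in> {..<n l}" using key[OF i] i unfolding MI_def by auto
        next
          fix l assume "l \<notin> \<Union>(set Ls)"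
          then have "\<not> (\<exists>i<m. l \<in> Ls!i)" unfolding m_def by (meson UnionI nth_mem)
          then show "a l = undefined" unfolding a_def by auto
        qed
        have "psi a = beta"
        proof
          fix i
          show "psi a i = beta i"
          proof (cases "i < m")
            case True
            have bi: "beta i \<in> MI n (Ls!i)" using beta True by auto
            show ?thesis
            proof
              fix l
              show "psi a i l = beta i l"
                using True key[OF True] bi unfolding psi_def MI_def
                by (auto simp: PiE_def extensional_def)
            qed
          next
            case False
            then show ?thesis using beta unfolding psi_def by (auto simp: PiE_def extensional_def)
          qed
        qed
        then show "beta \<in> psi ` MI n (\<Union>(set Ls))" using aMI by blast
      qed
    qed
  qed
  have "(\<Prod>i<length Ls. \<Sum>b\<in>MI n (Ls!i). g i b) = (\<Sum>beta\<in>PiE {..<m} (\<lambda>i. MI n (Ls!i)). \<Prod>i<m. g i (beta i))"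
    unfolding m_def by (rule prod_sum_PiE) (auto intro: finite_MI simp: fin)
  also have "\<dots> = (\<Sum>a\<in>MI n (\<Union>(set Ls)). \<Prod>i<m. g i (psi a i))"
    by (rule sum.reindex_bij_betw[OF bij, symmetric])
  also have "\<dots> = (\<Sum>a\<in>MI n (\<Union>(set Ls)). \<Prod>i<length Ls. g i (restrict a (Ls!i)))"
    unfolding psi_def m_def by simp
  finally show ?thesis by simp
qed

lemma orth_comb:
  fixes n :: "nat \<Rightarrow> nat" and Ls :: "nat set list" and Xs :: "gten list" and rs :: "nat list" and Q :: gten
  assumes disj: "\<forall>i<length Ls. \<forall>j<length Ls. i \<noteq> j \<longrightarrow> Ls!i \<inter> Ls!j = {}"
    and fin: "\<forall>i<length Ls. finite (Ls!i)"
    and len: "length Xs = length Ls" "length rs = length Ls"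
    and orthX: "\<forall>j<length Ls. orth (MI n (Ls!j)) (Xs!j) (rs!j)"
    and orthQ: "orth (MI (\<lambda>j. rs!j) {..<length Ls}) Q p"
  shows "orth (MI n (\<Union>(set Ls))) (comb Q Xs rs Ls) p"
  unfolding orth_def
proof (intro allI impI)
  fix c c' assume c: "c < p" and c': "c' < p"
  define m where "m = length Ls"
  define D where "D = MI (\<lambda>j. rs!j) {..<m}"
  have finD: "finite D" unfolding D_def by (rule finite_MI) simp
  have "(\<Sum>a\<in>MI n (\<Union>(set Ls)). cnj (comb Q Xs rs Ls c a) * comb Q Xs rs Ls c' a)
     = (\<Sum>a\<in>MI n (\<Union>(set Ls)). \<Sum>d\<in>D. \<Sum>e\<in>D. cnj (Q c d) * Q c' e *
          (\<Prod>j<m. cnj ((Xs!j) (d j) (restrict a (Ls!j))) * (Xs!j) (e j) (restrict a (Ls!j))))"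
    unfolding comb_def D_def m_def len
    by (simp add: sum_distrib_left sum_distrib_right prod.distrib mult_ac)
  also have "\<dots> = (\<Sum>d\<in>D. \<Sum>e\<in>D. cnj (Q c d) * Q c' e *
          (\<Sum>a\<in>MI n (\<Union>(set Ls)). \<Prod>j<m. cnj ((Xs!j) (d j) (restrict a (Ls!j))) * (Xs!j) (e j) (restrict a (Ls!j))))"
    by (simp add: sum_distrib_left sum.swap[of _ "MI n (\<Union>(set Ls))"] sum.swap[of _ "MI n (\<Union>(set Ls))" D])
  also have "\<dots> = (\<Sum>d\<in>D. \<Sum>e\<in>D. cnj (Q c d) * Q c' e *
          (\<Prod>j<m. \<Sum>b\<in>MI n (Ls!j). cnj ((Xs!j) (d j) b) * (Xs!j) (e j) b))"
    unfolding m_def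
    apply (intro sum.cong refl)
    subgoal for d e
      using sum_MI_split[OF disj fin, where n=n and g="\<lambda>j b. cnj ((Xs!j) (d j) b) * (Xs!j) (e j) b"] by simp
    done
  also have "\<dots> = (\<Sum>d\<in>D. \<Sum>e\<in>D. cnj (Q c d) * Q c' e * (if d = e then 1 else 0))"
  proof (intro sum.cong refl)
    fix d e assume d: "d \<in> D" and e: "e \<in> D"
    have "(\<Prod>j<m. \<Sum>b\<in>MI n (Ls!j). cnj ((Xs!j) (d j) b) * (Xs!j) (e j) b)
        = (\<Prod>j<m. if d j = e j then 1 else 0)"
    proof (intro prod.cong refl)
      fix j assume j: "j \<in> {..<m}"
      have "d j < rs!j" "e j < rs!j" using d e j unfolding D_def MI_def by auto
      then show "(\<Sum>b\<in>MI n (Ls!j). cnj ((Xs!j) (d j) b) * (Xs!j) (e j) b) = (if d j = e j then 1 else 0)"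
        using orthX j unfolding orth_def m_def by auto
    qed
    also have "\<dots> = (if d = e then 1 else 0)"
    proof (cases "d = e")
      case True then show ?thesis by simp
    next
      case False
      then obtain j where "d j \<noteq> e j" by auto
      moreover have "j < m" using d e \<open>d j \<noteq> e j\<close> unfolding D_def MI_def
        by (auto simp: PiE_def extensional_def) (metis lessThan_iff)
      ultimately show ?thesis using False by (auto intro: prod_zero)
    qed
    finally show "cnj (Q c d) * Q c' e * (\<Prod>j<m. \<Sum>b\<in>MI n (Ls!j). cnj ((Xs!j) (d j) b) * (Xs!j) (e j) b)
        = cnj (Q c d) * Q c' e * (if d = e then 1 else 0)" by simp
  qed
  also have "\<dots> = (\<Sum>d\<in>D. cnj (Q c d) * Q c' d)"
  proof (intro sum.cong refl)
    fix d assume "d \<in> D"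
    have "(\<Sum>e\<in>D. cnj (Q c d) * Q c' e * (if d = e then 1 else 0)) = (\<Sum>e\<in>D. if d = e then cnj (Q c d) * Q c' e else 0)"
      by (intro sum.cong refl) simp
    also have "\<dots> = cnj (Q c d) * Q c' d" using \<open>d \<in> D\<close> finD by (simp add: sum.delta)
    finally show "(\<Sum>e\<in>D. cnj (Q c d) * Q c' e * (if d = e then 1 else 0)) = cnj (Q c d) * Q c' d" .
  qed
  also have "\<dots> = (if c = c' then 1 else 0)"
    using orthQ c c' unfolding orth_def D_def m_def by auto
  finally show "(\<Sum>a\<in>MI n (\<Union>(set Ls)). cnj (comb Q Xs rs Ls c a) * comb Q Xs rs Ls c' a) = (if c = c' then 1 else 0)" .
qed



lemma MI_PiE: "MI (\<lambda>i. rs!i) {..<m} = PiE {..<m} (\<lambda>i. {..<rs!i})"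
  unfolding MI_def ..

lemma proj_coef:
  assumes orthX: "orth M Xh p"
    and sp: "\<forall>b\<in>M. X0c b = (\<Sum>c'<p. y c' * Xh c' b)"
    and b: "b \<in> M"
  shows "(\<Sum>c'<p. mhat M Xh (\<lambda>_ . X0c) c' 0 * Xh c' b) = X0c b"
proof -
  have "mhat M Xh (\<lambda>_ . X0c) c' 0 = y c'" if "c' < p" for c'
  proof -
    have "mhat M Xh (\<lambda>_ . X0c) c' 0 = (\<Sum>a\<in>M. cnj (Xh c' a) * (\<Sum>c''<p. y c'' * Xh c'' a))"
      unfolding mhat_def using sp by (auto intro!: sum.cong)
    also have "\<dots> = (\<Sum>c''<p. y c'' * (\<Sum>a\<in>M. cnj (Xh c' a) * Xh c'' a))"
      by (simp add: sum_distrib_left sum.swap[of _ M] mult_ac)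
    also have "\<dots> = (\<Sum>c''<p. y c'' * (if c' = c'' then 1 else 0))"
      using orthX that unfolding orth_def by (auto intro!: sum.cong)
    also have "\<dots> = y c'" using that by (simp add: if_distrib[of "\<lambda>x. _ * x"] sum.delta cong: if_cong)
    finally show ?thesis .
  qed
  then have "(\<Sum>c'<p. mhat M Xh (\<lambda>_ . X0c) c' 0 * Xh c' b) = (\<Sum>c'<p. y c' * Xh c' b)" by simp
  also have "\<dots> = X0c b" using sp b by simp
  finally show ?thesis .
qed

lemma comb_cmult_proj:
  fixes n :: "nat \<Rightarrow> nat" and Ls :: "nat set list" and Xh X0s :: "gten list" and rh rs :: "nat list" and C :: gten
  assumes len: "length Xh = m" "length rh = m" "length X0s = m" "length rs = m" "length Ls = m"
    and orthX: "\<forall>i<m. orth (MI n (Ls!i)) (Xh!i) (rh!i)"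
    and sp: "\<forall>i<m. \<forall>c<rs!i. \<exists>y. \<forall>b\<in>MI n (Ls!i). (X0s!i) c b = (\<Sum>c'<rh!i. y c' * (Xh!i) c' b)"
    and a: "a \<in> MI n (\<Union>(set Ls))"
  shows "comb (cmult C (map (\<lambda>i. mhat (MI n (Ls!i)) (Xh!i) (X0s!i)) [0..<m]) rs) Xh rh Ls k a
       = comb C X0s rs Ls k a"
proof -
  define M where "M i = mhat (MI n (Ls!i)) (Xh!i) (X0s!i)" for i
  have key: "(\<Sum>c'<rh!i. M i c' c * (Xh!i) c' (restrict a (Ls!i))) = (X0s!i) c (restrict a (Ls!i))"
    if i: "i < m" and c: "c < rs!i" for i c
  proof -
    obtain y where y: "\<forall>b\<in>MI n (Ls!i). (X0s!i) c b = (\<Sum>c'<rh!i. y c' * (Xh!i) c' b)"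
      using sp i c by blast
    have ra: "restrict a (Ls!i) \<in> MI n (Ls!i)"
      by (rule MI_restrict[OF a], rule Union_upper, rule nth_mem) (use i len in simp)
    have Mi: "M i c' c = mhat (MI n (Ls!i)) (Xh!i) (\<lambda>_. (X0s!i) c) c' 0" for c'
      unfolding M_def mhat_def by simp
    show ?thesis unfolding Mi
      by (rule proj_coef[OF _ y ra]) (use orthX i in auto)
  qed
  have "comb (cmult C (map M [0..<m]) rs) Xh rh Ls k a
      = (\<Sum>c'\<in>MI (\<lambda>i. rh!i) {..<m}. \<Sum>c\<in>MI (\<lambda>i. rs!i) {..<m}.
           C k c * (\<Prod>i<m. M i (c' i) (c i) * (Xh!i) (c' i) (restrict a (Ls!i))))"
    unfolding comb_def cmult_def len by (simp add: sum_distrib_right sum_distrib_left prod.distrib mult_ac)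
  also have "\<dots> = (\<Sum>c\<in>MI (\<lambda>i. rs!i) {..<m}. C k c *
       (\<Sum>c'\<in>MI (\<lambda>i. rh!i) {..<m}. \<Prod>i<m. M i (c' i) (c i) * (Xh!i) (c' i) (restrict a (Ls!i))))"
    by (simp add: sum.swap[of _ "MI (\<lambda>i. rh!i) {..<m}"] sum_distrib_left)
  also have "\<dots> = (\<Sum>c\<in>MI (\<lambda>i. rs!i) {..<m}. C k c *
       (\<Prod>i<m. \<Sum>c'<rh!i. M i c' (c i) * (Xh!i) c' (restrict a (Ls!i))))"
    unfolding MI_PiE by (intro sum.cong refl arg_cong[where f="\<lambda>x. _ * x"] prod_sum_PiE[symmetric]) auto
  also have "\<dots> = (\<Sum>c\<in>MI (\<lambda>i. rs!i) {..<m}. C k c * (\<Prod>i<m. (X0s!i) (c i) (restrict a (Ls!i))))"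
    by (intro sum.cong refl arg_cong[where f="\<lambda>x. _ * x"] prod.cong key) (auto simp: MI_def)
  also have "\<dots> = comb C X0s rs Ls k a" unfolding comb_def len ..
  finally show ?thesis unfolding M_def .
qed

lemma comb_sred:
  "comb (sred S q C) Xs rs Ls k a = (\<Sum>s'<q. S s' k * comb C Xs rs Ls s' a)"
  unfolding comb_def sred_def
  by (simp add: sum_distrib_left sum_distrib_right sum.swap[of _ "{..<q}"] mult_ac)

lemma comb_lin:
  "(\<Sum>c\<in>A. x c * comb Q Xs rs Ls c b) = comb (\<lambda>_ d. \<Sum>c\<in>A. x c * Q c d) Xs rs Ls k b"
  unfolding comb_def
  by (simp add: sum_distrib_left sum_distrib_right sum.swap[of _ A] mult_ac)

lemma comb_cong:
  assumes "\<forall>d\<in>MI (\<lambda>i. rs!i) {..<length Xs}. Q k d = Q' k' d"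
  shows "comb Q Xs rs Ls k b = comb Q' Xs rs Ls k' b"
  unfolding comb_def using assms by (auto intro!: sum.cong)

lemma join_sum:
  "(\<Sum>c<2*q. (if q \<le> c then y (c - q) else 0) * Defs.join A B q c d) = (\<Sum>k<q. y k * B k d)"
proof -
  have e: "{..<2*q} = {..<q} \<union> {q..<q+q}" by auto
  have "(\<Sum>c<2*q. (if q \<le> c then y (c - q) else 0) * Defs.join A B q c d)
     = (\<Sum>c<q. (if q \<le> c then y (c - q) else 0) * Defs.join A B q c d) + (\<Sum>c\<in>{q..<q+q}. (if q \<le> c then y (c - q) else 0) * Defs.join A B q c d)"
    unfolding e by (rule sum.union_disjoint) auto
  also have "(\<Sum>c<q. (if q \<le> c then y (c - q) else 0) * Defs.join A B q c d) = 0" by simp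
  also have "(\<Sum>c\<in>{q..<q+q}. (if q \<le> c then y (c - q) else 0) * Defs.join A B q c d) = (\<Sum>c\<in>{q..<q+q}. y (c - q) * B (c - q) d)"
    unfolding Defs.join_def by (intro sum.cong refl) auto
  also have "\<dots> = (\<Sum>k<q. y k * B k d)"
    using sum.shift_bounds_nat_ivl[of "\<lambda>c. y (c - q) * B (c - q) d" 0 q q]
    by (simp add: lessThan_atLeast0 add.commute)
  finally show ?thesis by simp
qed



lemma la_surj:
  fixes S :: "nat \<Rightarrow> nat \<Rightarrow> complex" and q :: nat
  assumes inj: "\<forall>x. (\<forall>s<q. (\<Sum>s'<q. x s' * S s' s) = 0) \<longrightarrow> (\<forall>s'<q. x s' = 0)"
  shows "\<forall>s0<q. \<exists>y. \<forall>s'<q. (\<Sum>s<q. S s' s * y s) = (if s' = s0 then 1 else 0)"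
proof -
  define A where "A = Matrix.mat q q (\<lambda>(i,j). S j i)"
  define Sm where "Sm = Matrix.mat q q (\<lambda>(i,j). S i j)"
  have A: "A \<in> carrier_mat q q" and Sm: "Sm \<in> carrier_mat q q" unfolding A_def Sm_def by auto
  have tr: "transpose_mat Sm = A" unfolding A_def Sm_def by auto
  have "det A \<noteq> 0"
  proof
    assume "det A = 0"
    then obtain v where v: "v \<in> carrier_vec q" "v \<noteq> 0\<^sub>v q" "A *\<^sub>v v = 0\<^sub>v q"
      using det_0_iff_vec_prod_zero[OF A] by auto
    have "\<forall>s<q. (\<Sum>s'<q. v $ s' * S s' s) = 0"
    proof (intro allI impI)
      fix s assume s: "s < q"
      have "(A *\<^sub>v v) $ s = 0" using v(3) s by simp
      moreover have "(A *\<^sub>v v) $ s = (\<Sum>s'<q. S s' s * v $ s')"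
        using s v(1) unfolding A_def by (auto simp: mult_mat_vec_def scalar_prod_def lessThan_atLeast0 intro!: sum.cong)
      ultimately show "(\<Sum>s'<q. v $ s' * S s' s) = 0" by (simp add: mult.commute)
    qed
    with inj have "\<forall>s'<q. v $ s' = 0" by blast
    with v(1,2) show False by (auto simp: vec_eq_iff)
  qed
  then have "det Sm \<noteq> 0" using det_transpose[OF Sm] tr by simp
  from det_non_zero_imp_unit[OF Sm this, of "()"]
  obtain B where B: "B \<in> carrier_mat q q" "Sm * B = 1\<^sub>m q"
    unfolding Units_def ring_mat_def by auto
  show ?thesis
  proof (intro allI impI)
    fix s0 assume s0: "s0 < q"
    show "\<exists>y. \<forall>s'<q. (\<Sum>s<q. S s' s * y s) = (if s' = s0 then 1 else 0)"
    proof (intro exI allI impI)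
      fix s' assume s': "s' < q"
      have "(Sm * B) $$ (s', s0) = (if s' = s0 then 1 else 0)" using B(2) s' s0 by simp
      moreover have "(Sm * B) $$ (s', s0) = (\<Sum>s<q. S s' s * B $$ (s, s0))"
        using s' s0 B(1) unfolding Sm_def
        by (auto simp: times_mat_def scalar_prod_def lessThan_atLeast0 intro!: sum.cong)
      ultimately show "(\<Sum>s<q. S s' s * B $$ (s, s0)) = (if s' = s0 then 1 else 0)" by simp
    qed
  qed
qed


definition modefr :: "gten \<Rightarrow> nat \<Rightarrow> nat list \<Rightarrow> bool" where
  "modefr C rt rs = (\<forall>i<length rs. \<forall>x. (\<forall>k<rt. \<forall>c\<in>MI (\<lambda>i. rs!i) {..<length rs}.
            (\<Sum>s<rs!i. x s * C k (c(i:=s))) = 0) \<longrightarrow> (\<forall>s<rs!i. x s = 0))"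

lemma full_modefr: "full_mlrank C rt rs \<Longrightarrow> modefr C rt rs"
  unfolding full_mlrank_def modefr_def by (elim conjE) assumption

lemma modefrD:
  assumes "modefr C rt rs" "i < length rs"
    "\<And>k c. k < rt \<Longrightarrow> c \<in> MI (\<lambda>i. rs!i) {..<length rs} \<Longrightarrow> (\<Sum>s<rs!i. x s * C k (c(i:=s))) = 0"
    "s < rs!i"
  shows "x s = 0"
proof -
  have "\<forall>k<rt. \<forall>c\<in>MI (\<lambda>i. rs!i) {..<length rs}. (\<Sum>s<rs!i. x s * C k (c(i:=s))) = 0"
    using assms(3) by simp
  then show ?thesis using assms(1,2,4) unfolding modefr_def by simp
qed

lemma S_inj:
  assumes qr: "qr_cond rt rs C i Qt S" and mf: "modefr C rt rs" and i: "i < length rs"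
  shows "\<forall>x. (\<forall>s<rs!i. (\<Sum>s'<rs!i. x s' * S s' s) = 0) \<longrightarrow> (\<forall>s'<rs!i. x s' = 0)"
proof (intro allI impI)
  fix x s0 assume hx: "\<forall>s<rs!i. (\<Sum>s'<rs!i. x s' * S s' s) = 0" and s0: "s0 < rs!i"
  have eq: "\<And>k c. k < rt \<Longrightarrow> c \<in> MI (\<lambda>j. rs!j) {..<length rs} \<Longrightarrow>
          C k c = (\<Sum>s<rs!i. Qt k (c(i:=s)) * S (c i) s)"
  proof -
    fix k c assume "k < rt" "c \<in> MI (\<lambda>j. rs!j) {..<length rs}"
    from qr have "\<forall>k<rt. \<forall>c\<in>MI (\<lambda>j. rs!j) {..<length rs}. C k c = (\<Sum>s<rs!i. Qt k (c(i:=s)) * S (c i) s)"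
      unfolding qr_cond_def by (elim conjE)
    then show "C k c = (\<Sum>s<rs!i. Qt k (c(i:=s)) * S (c i) s)" using \<open>k < rt\<close> \<open>c \<in> _\<close> by blast
  qed
  show "x s0 = 0"
  proof (rule modefrD[OF mf i _ s0])
    fix k c assume k: "k < rt" and c: "c \<in> MI (\<lambda>i. rs!i) {..<length rs}"
    have cs: "c(i:=s') \<in> MI (\<lambda>i. rs!i) {..<length rs}" if "s' < rs!i" for s'
      using c that i unfolding MI_def by (auto simp: PiE_iff extensional_def)
    have "(\<Sum>s'<rs!i. x s' * C k (c(i:=s'))) = (\<Sum>s'<rs!i. x s' * (\<Sum>s<rs!i. Qt k (c(i:=s)) * S s' s))"
    proof (intro sum.cong refl)
      fix s' assume "s' \<in> {..<rs!i}"
      then show "x s' * C k (c(i:=s')) = x s' * (\<Sum>s<rs!i. Qt k (c(i:=s)) * S s' s)"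
        using eq[OF k cs[of s']] by simp
    qed
    also have "\<dots> = (\<Sum>s'<rs!i. \<Sum>s<rs!i. x s' * (Qt k (c(i:=s)) * S s' s))"
      by (simp add: sum_distrib_left)
    also have "\<dots> = (\<Sum>s<rs!i. \<Sum>s'<rs!i. x s' * (Qt k (c(i:=s)) * S s' s))"
      by (rule sum.swap)
    also have "\<dots> = (\<Sum>s<rs!i. Qt k (c(i:=s)) * (\<Sum>s'<rs!i. x s' * S s' s))"
      by (simp add: sum_distrib_left mult_ac)
    also have "\<dots> = 0" using hx by simp
    finally show "(\<Sum>s<rs!i. x s * C k (c(i:=s))) = 0" .
  qed
qed

lemma modefr_sred:
  assumes Sinj: "\<forall>x. (\<forall>s<q. (\<Sum>s'<q. x s' * S s' s) = 0) \<longrightarrow> (\<forall>s'<q. x s' = 0)"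
    and fr: "full_mlrank Cn q rs"
  shows "modefr (sred S q Cn) q rs"
  unfolding modefr_def
proof (intro allI impI)
  fix j x s0 assume j: "j < length rs"
    and h: "\<forall>k<q. \<forall>c\<in>MI (\<lambda>i. rs!i) {..<length rs}. (\<Sum>s<rs!j. x s * sred S q Cn k (c(j:=s))) = 0"
    and s0: "s0 < rs!j"
  have mf: "modefr Cn q rs" using fr by (rule full_modefr)
  show "x s0 = 0"
  proof (rule modefrD[OF mf j _ s0])
    fix s' c assume s': "s' < q" and c: "c \<in> MI (\<lambda>i. rs!i) {..<length rs}"
    define v where "v s'' = (\<Sum>s<rs!j. x s * Cn s'' (c(j:=s)))" for s''
    have "\<forall>k<q. (\<Sum>s''<q. v s'' * S s'' k) = 0"
    proof (intro allI impI)
      fix k assume k: "k < q"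
      have "(\<Sum>s''<q. v s'' * S s'' k) = (\<Sum>s''<q. \<Sum>s<rs!j. x s * (S s'' k * Cn s'' (c(j:=s))))"
        unfolding v_def by (simp add: sum_distrib_left sum_distrib_right mult_ac)
      also have "\<dots> = (\<Sum>s<rs!j. \<Sum>s''<q. x s * (S s'' k * Cn s'' (c(j:=s))))"
        by (rule sum.swap)
      also have "\<dots> = (\<Sum>s<rs!j. x s * sred S q Cn k (c(j:=s)))"
        unfolding sred_def by (simp add: sum_distrib_left)
      also have "\<dots> = 0" using h k c by blast
      finally show "(\<Sum>s''<q. v s'' * S s'' k) = 0" .
    qed
    then have "\<forall>s''<q. v s'' = 0" using Sinj by blast
    then show "(\<Sum>s<rs!j. x s * Cn s' (c(j:=s))) = 0" using s' unfolding v_def by blast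
  qed
qed

lemma finite_leaves: "finite (leaves t)"
  by (induction t) auto

lemma subtrees_self: "t \<in> subtrees t"
  by (cases t) auto

lemma subtrees_child: "c \<in> set cs \<Longrightarrow> subtrees c \<subseteq> subtrees (Node cs)"
  by auto



definition Pind :: "(nat \<Rightarrow> nat) \<Rightarrow> (tree \<Rightarrow> gten) \<Rightarrow> (nat \<Rightarrow> nat \<Rightarrow> nat \<Rightarrow> complex)
    \<Rightarrow> (tree \<Rightarrow> nat) \<Rightarrow> tree \<Rightarrow> gten \<Rightarrow> gten \<Rightarrow> gten list \<Rightarrow> nat list \<Rightarrow> bool" where
  "Pind n Cn Ul r tau C C0 Xh rh = (\<forall>cs. tau = Node cs \<longrightarrow> wf_tree tau \<longrightarrow>
     (\<forall>cs'. Node cs' \<in> subtrees tau \<longrightarrow> full_mlrank (Cn (Node cs')) (r (Node cs')) (map r cs')) \<longrightarrow>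
     modefr C (r tau) (map r cs) \<longrightarrow>
     (length Xh = length cs \<and> length rh = length cs \<and>
      C0 = cmult C (map (\<lambda>i. mhat (MI n (leaves (cs!i))) (Xh!i) (X0 Cn Ul r (cs!i))) [0..<length cs]) (map r cs) \<and>
      (\<forall>i<length cs. orth (MI n (leaves (cs!i))) (Xh!i) (rh!i) \<and>
         (\<forall>c<r (cs!i). \<exists>y. \<forall>b\<in>MI n (leaves (cs!i)). X0 Cn Ul r (cs!i) c b = (\<Sum>c'<rh!i. y c' * (Xh!i) c' b)))))"

lemma main_ind:
  assumes "integ n Cn Ul r t0 t1 tau C F C1 C0 Xh rh"
  shows "Pind n Cn Ul r tau C C0 Xh rh"
  using assms
proof (induction rule: integ.induct)
  case (step Xh cs rh C F C0 Ch C1)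
  show ?case
    unfolding Pind_def
  proof (intro allI impI)
    fix cs0 assume eq: "Node cs = Node cs0" and wf: "wf_tree (Node cs)"
      and fr: "\<forall>cs'. Node cs' \<in> subtrees (Node cs) \<longrightarrow> full_mlrank (Cn (Node cs')) (r (Node cs')) (map r cs')"
      and mf: "modefr C (r (Node cs)) (map r cs0)"
    from eq have cs0: "cs0 = cs" by simp
    have child: "orth (MI n (leaves (cs!i))) (Xh!i) (rh!i) \<and>
         (\<forall>c<r (cs!i). \<exists>y. \<forall>b\<in>MI n (leaves (cs!i)). X0 Cn Ul r (cs!i) c b = (\<Sum>c'<rh!i. y c' * (Xh!i) c' b))"
      if i: "i < length cs" for i
    proof -
      obtain Qt S where qr: "qr_cond (r (Node cs)) (map r cs) C i Qt S"
        and leafc: "\<forall>l. cs!i = Leaf l \<longrightarrow>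
           (\<exists>Y. solves Y (redF n (r (Node cs)) (map r cs) (map (X0 Cn Ul r) cs) (map leaves cs) Qt i F)
                   t0 t1 (sred S (r (cs!i)) (X0 Cn Ul r (cs!i))) (r (cs!i)) (MI n {l})
             \<and> orth (MI n {l}) (Xh!i) (rh!i)
             \<and> cols_span_eq (MI n {l}) (Xh!i) (rh!i)
                  (Defs.join (Y t1) (X0 Cn Ul r (cs!i)) (r (cs!i))) (2 * r (cs!i)))"
        and nodec: "\<forall>cs'. cs!i = Node cs' \<longrightarrow>
           (\<exists>C1' C0' Xs' rs' Qh.
              (integ n Cn Ul r t0 t1 (cs!i) (sred S (r (cs!i)) (Cn (cs!i)))
                 (redF n (r (Node cs)) (map r cs) (map (X0 Cn Ul r) cs) (map leaves cs) Qt i F)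
                 C1' C0' Xs' rs' \<and>
               Pind n Cn Ul r (cs!i) (sred S (r (cs!i)) (Cn (cs!i))) C0' Xs' rs')
            \<and> orth (MI (\<lambda>j. rs'!j) {..<length cs'}) Qh (rh!i)
            \<and> cols_span_eq (MI (\<lambda>j. rs'!j) {..<length cs'}) Qh (rh!i)
                 (Defs.join C1' C0' (r (cs!i))) (2 * r (cs!i))
            \<and> Xh!i = comb Qh Xs' rs' (map leaves cs'))"
        using step.IH[rule_format, OF i] by blast
      define q where "q = r (cs!i)"
      have iq: "i < length (map r cs)" using i by simp
      have Sinj: "\<forall>x. (\<forall>s<q. (\<Sum>s'<q. x s' * S s' s) = 0) \<longrightarrow> (\<forall>s'<q. x s' = 0)"
        using S_inj[OF qr _ iq] mf i unfolding cs0 q_def by simp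
      show ?thesis
      proof (cases "cs!i")
        case (Leaf l)
        then obtain Y where orthl: "orth (MI n {l}) (Xh!i) (rh!i)"
          and sp: "cols_span_eq (MI n {l}) (Xh!i) (rh!i) (Defs.join (Y t1) (X0 Cn Ul r (cs!i)) q) (2 * q)"
          using leafc unfolding q_def by blast
        have "\<exists>y. \<forall>b\<in>MI n {l}. X0 Cn Ul r (cs!i) c b = (\<Sum>c'<rh!i. y c' * (Xh!i) c' b)" if c: "c < q" for c
        proof -
          define yy where "yy k = (if k = c then 1 else (0::complex))" for k
          obtain x where x: "\<forall>a\<in>MI n {l}. (\<Sum>c'<rh!i. x c' * (Xh!i) c' a) =
              (\<Sum>c''<2*q. (if q \<le> c'' then yy (c'' - q) else 0) * Defs.join (Y t1) (X0 Cn Ul r (cs!i)) q c'' a)"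
            using conjunct2[OF sp[unfolded cols_span_eq_def], rule_format, of "\<lambda>c''. if q \<le> c'' then yy (c'' - q) else 0"] by blast
          have "\<forall>a\<in>MI n {l}. X0 Cn Ul r (cs!i) c a = (\<Sum>c'<rh!i. x c' * (Xh!i) c' a)"
          proof
            fix a assume "a \<in> MI n {l}"
            then have "(\<Sum>c'<rh!i. x c' * (Xh!i) c' a) = (\<Sum>k<q. yy k * X0 Cn Ul r (cs!i) k a)"
              using x join_sum by metis
            also have "\<dots> = X0 Cn Ul r (cs!i) c a"
              unfolding yy_def using c by (simp add: if_distrib[of "\<lambda>z. z * _"] cong: if_cong)
            finally show "X0 Cn Ul r (cs!i) c a = (\<Sum>c'<rh!i. x c' * (Xh!i) c' a)" by simp
          qed
          then show ?thesis by blast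
        qed
        then show ?thesis using orthl Leaf unfolding q_def by simp
      next
        case (Node cs')
        then obtain C1' C0' Xs' rs' Qh where
              sub: "Pind n Cn Ul r (cs!i) (sred S (r (cs!i)) (Cn (cs!i))) C0' Xs' rs'"
            and orthQ: "orth (MI (\<lambda>j. rs'!j) {..<length cs'}) Qh (rh!i)"
            and spQ: "cols_span_eq (MI (\<lambda>j. rs'!j) {..<length cs'}) Qh (rh!i) (Defs.join C1' C0' q) (2 * q)"
            and XhQ: "Xh!i = comb Qh Xs' rs' (map leaves cs')"
          using nodec[rule_format, OF Node] unfolding q_def by blast
        have ci: "cs!i \<in> set cs" using i by simp
        have wfi: "wf_tree (cs!i)" using wf i by (simp add: list_all_length)
        then have wfc: "wf_tree (Node cs')" using Node by simp
        have frc: "\<forall>cs'a. Node cs'a \<in> subtrees (cs!i) \<longrightarrow> full_mlrank (Cn (Node cs'a)) (r (Node cs'a)) (map r cs'a)"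
          using fr subtrees_child[OF ci] by blast
        have frn: "full_mlrank (Cn (Node cs')) q (map r cs')"
          using frc subtrees_self[of "cs!i"] Node unfolding q_def by simp
        have mfc: "modefr (sred S q (Cn (cs!i))) q (map r cs')"
          using modefr_sred[OF Sinj frn] Node by simp
        have IH: "length Xs' = length cs' \<and> length rs' = length cs' \<and>
                  C0' = cmult (sred S q (Cn (cs!i))) (map (\<lambda>j. mhat (MI n (leaves (cs'!j))) (Xs'!j) (X0 Cn Ul r (cs'!j))) [0..<length cs']) (map r cs') \<and>
                  (\<forall>j<length cs'. orth (MI n (leaves (cs'!j))) (Xs'!j) (rs'!j) \<and>
                    (\<forall>c<r (cs'!j). \<exists>y. \<forall>b\<in>MI n (leaves (cs'!j)). X0 Cn Ul r (cs'!j) c b = (\<Sum>c'<rs'!j. y c' * (Xs'!j) c' b)))"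
          using sub Node wfc frc mfc unfolding q_def Pind_def by simp
        define Ls' where "Ls' = map leaves cs'"
        have lenX: "length Xs' = length cs'" and lenr: "length rs' = length cs'"
          and C0eq: "C0' = cmult (sred S q (Cn (cs!i))) (map (\<lambda>j. mhat (MI n (leaves (cs'!j))) (Xs'!j) (X0 Cn Ul r (cs'!j))) [0..<length cs']) (map r cs')"
          and orthX: "\<forall>j<length cs'. orth (MI n (leaves (cs'!j))) (Xs'!j) (rs'!j)"
          and spX: "\<forall>j<length cs'. \<forall>c<r (cs'!j). \<exists>y. \<forall>b\<in>MI n (leaves (cs'!j)). X0 Cn Ul r (cs'!j) c b = (\<Sum>c'<rs'!j. y c' * (Xs'!j) c' b)"
          using IH by auto
        have disj: "\<forall>j<length Ls'. \<forall>k<length Ls'. j \<noteq> k \<longrightarrow> Ls'!j \<inter> Ls'!k = {}"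
          using wfc unfolding Ls'_def by simp
        have finL: "\<forall>j<length Ls'. finite (Ls'!j)" unfolding Ls'_def by (simp add: finite_leaves)
        have lv: "leaves (cs!i) = \<Union>(set Ls')" using Node unfolding Ls'_def by simp
        have orthi: "orth (MI n (leaves (cs!i))) (Xh!i) (rh!i)"
          unfolding lv XhQ Ls'_def[symmetric]
          by (rule orth_comb[OF disj finL]) (use lenX lenr orthX orthQ in \<open>auto simp: Ls'_def\<close>)
        have X0i: "X0 Cn Ul r (cs!i) = comb (Cn (cs!i)) (map (X0 Cn Ul r) cs') (map r cs') Ls'"
          using Node unfolding Ls'_def by simp
        have spi: "\<exists>x. \<forall>b\<in>MI n (leaves (cs!i)). X0 Cn Ul r (cs!i) c b = (\<Sum>c'<rh!i. x c' * (Xh!i) c' b)"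
          if c: "c < q" for c
        proof -
          obtain y where y: "\<forall>s'<q. (\<Sum>s<q. S s' s * y s) = (if s' = c then 1 else 0)"
            using la_surj[OF Sinj] c by blast
          define yy where "yy c'' = (if q \<le> c'' then y (c'' - q) else 0)" for c''
          obtain x where x: "\<forall>d\<in>MI (\<lambda>j. rs'!j) {..<length cs'}. (\<Sum>c'<rh!i. x c' * Qh c' d) =
              (\<Sum>c''<2*q. yy c'' * Defs.join C1' C0' q c'' d)"
            using conjunct2[OF spQ[unfolded cols_span_eq_def], rule_format, of yy] by blast
          have x2: "\<forall>d\<in>MI (\<lambda>j. rs'!j) {..<length Xs'}. (\<Sum>c'<rh!i. x c' * Qh c' d) = (\<Sum>k<q. y k * C0' k d)"
            using x join_sum[of q y C1' C0'] lenX unfolding yy_def by simp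
          have "X0 Cn Ul r (cs!i) c b = (\<Sum>c'<rh!i. x c' * (Xh!i) c' b)" if b: "b \<in> MI n (leaves (cs!i))" for b
          proof -
            have "(\<Sum>c'<rh!i. x c' * (Xh!i) c' b) = comb (\<lambda>_ d. \<Sum>c'<rh!i. x c' * Qh c' d) Xs' rs' Ls' 0 b"
              unfolding XhQ Ls'_def[symmetric] by (rule comb_lin)
            also have "\<dots> = comb (\<lambda>_ d. \<Sum>k<q. y k * C0' k d) Xs' rs' Ls' 0 b"
              by (rule comb_cong) (use x2 in simp)
            also have "\<dots> = (\<Sum>k<q. y k * comb C0' Xs' rs' Ls' k b)"
              by (rule comb_lin[symmetric])
            also have "\<dots> = (\<Sum>k<q. y k * comb (sred S q (Cn (cs!i))) (map (X0 Cn Ul r) cs') (map r cs') Ls' k b)"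
            proof (intro sum.cong refl arg_cong[where f="\<lambda>z. _ * z"])
              fix k
              have mapeq: "map (\<lambda>j. mhat (MI n (leaves (cs'!j))) (Xs'!j) (X0 Cn Ul r (cs'!j))) [0..<length cs']
                  = map (\<lambda>j. mhat (MI n (Ls'!j)) (Xs'!j) (map (X0 Cn Ul r) cs' ! j)) [0..<length cs']"
                unfolding Ls'_def by (intro map_cong refl) simp
              show "comb C0' Xs' rs' Ls' k b = comb (sred S q (Cn (cs!i))) (map (X0 Cn Ul r) cs') (map r cs') Ls' k b"
                unfolding C0eq mapeq
                by (rule comb_cmult_proj[where m="length cs'"])
                   (use lenX lenr orthX spX b lv in \<open>auto simp: Ls'_def\<close>)
            qed
            also have "\<dots> = (\<Sum>k<q. y k * (\<Sum>s'<q. S s' k * X0 Cn Ul r (cs!i) s' b))"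
              unfolding comb_sred X0i ..
            also have "\<dots> = (\<Sum>k<q. \<Sum>s'<q. y k * (S s' k * X0 Cn Ul r (cs!i) s' b))"
              by (simp add: sum_distrib_left)
            also have "\<dots> = (\<Sum>s'<q. \<Sum>k<q. y k * (S s' k * X0 Cn Ul r (cs!i) s' b))"
              by (rule sum.swap)
            also have "\<dots> = (\<Sum>s'<q. (\<Sum>k<q. S s' k * y k) * X0 Cn Ul r (cs!i) s' b)"
              by (simp add: sum_distrib_right sum_distrib_left mult_ac)
            also have "\<dots> = (\<Sum>s'<q. (if s' = c then 1 else 0) * X0 Cn Ul r (cs!i) s' b)"
              using y by simp
            also have "\<dots> = X0 Cn Ul r (cs!i) c b"
              using c by (simp add: if_distrib[of "\<lambda>z. z * _"] cong: if_cong)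
            finally show ?thesis by simp
          qed
          then show ?thesis by blast
        qed
        show ?thesis using orthi spi unfolding q_def by blast
      qed
    qed
    show "length Xh = length cs0 \<and> length rh = length cs0 \<and>
      C0 = cmult C (map (\<lambda>i. mhat (MI n (leaves (cs0!i))) (Xh!i) (X0 Cn Ul r (cs0!i))) [0..<length cs0]) (map r cs0) \<and>
      (\<forall>i<length cs0. orth (MI n (leaves (cs0!i))) (Xh!i) (rh!i) \<and>
         (\<forall>c<r (cs0!i). \<exists>y. \<forall>b\<in>MI n (leaves (cs0!i)). X0 Cn Ul r (cs0!i) c b = (\<Sum>c'<rh!i. y c' * (Xh!i) c' b)))"
      unfolding cs0 using step.hyps(1,2,3) child by blast
  qed
qed



lemma H_zero:
  fixes H :: "(midx \<Rightarrow> complex) \<Rightarrow> (midx \<Rightarrow> complex)"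
  assumes "\<forall>c Y. H (\<lambda>a. c * Y a) = (\<lambda>a. c * H Y a)"
  shows "H (\<lambda>a. 0) = (\<lambda>a. 0)"
proof -
  have "H (\<lambda>a. 0 * (\<lambda>a. 0::complex) a) = (\<lambda>a. 0 * H (\<lambda>a. 0) a)" by (rule assms[rule_format])
  then show ?thesis by simp
qed

lemma H_sum:
  fixes H :: "(midx \<Rightarrow> complex) \<Rightarrow> (midx \<Rightarrow> complex)"
  assumes lin: "\<forall>Y Z. H (\<lambda>a. Y a + Z a) = (\<lambda>a. H Y a + H Z a)"
               "\<forall>c Y. H (\<lambda>a. c * Y a) = (\<lambda>a. c * H Y a)"
    and fin: "finite Cs"
  shows "H (\<lambda>a. \<Sum>c\<in>Cs. f c * b c a) = (\<lambda>a. \<Sum>c\<in>Cs. f c * H (b c) a)"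
  using fin
proof (induction Cs rule: finite_induct)
  case empty
  then show ?case using H_zero[OF lin(2)] by simp
next
  case (insert x F)
  have "H (\<lambda>a. \<Sum>c\<in>insert x F. f c * b c a) = H (\<lambda>a. f x * b x a + (\<Sum>c\<in>F. f c * b c a))"
    using insert by simp
  also have "\<dots> = (\<lambda>a. H (\<lambda>a. f x * b x a) a + H (\<lambda>a. \<Sum>c\<in>F. f c * b c a) a)"
    using lin(1) by simp
  also have "\<dots> = (\<lambda>a. f x * H (b x) a + (\<Sum>c\<in>F. f c * H (b c) a))"
    using insert.IH lin(2) by simp
  finally show ?case using insert by simp
qed

lemma energy_const:
  fixes M Cs :: "midx set" and H :: "(midx \<Rightarrow> complex) \<Rightarrow> (midx \<Rightarrow> complex)"
    and b :: "midx \<Rightarrow> midx \<Rightarrow> complex" and Ch :: "real \<Rightarrow> midx \<Rightarrow> complex"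
  assumes lin: "\<forall>Y Z. H (\<lambda>a. Y a + Z a) = (\<lambda>a. H Y a + H Z a)"
               "\<forall>c Y. H (\<lambda>a. c * Y a) = (\<lambda>a. c * H Y a)"
    and selfadj: "\<forall>Y Z. inner_on M (H Y) Z = inner_on M Y (H Z)"
    and finM: "finite M" and finC: "finite Cs" and t01: "t0 \<le> t1"
    and der: "\<forall>t\<in>{t0..t1}. \<forall>c\<in>Cs. ((\<lambda>s. Ch s c) has_vector_derivative
          (- \<i> * (\<Sum>a\<in>M. H (\<lambda>a'. \<Sum>c'\<in>Cs. Ch t c' * b c' a') a * cnj (b c a)))) (at t within {t0..t1})"
  shows "energy M H (\<lambda>a. \<Sum>c\<in>Cs. Ch t1 c * b c a) = energy M H (\<lambda>a. \<Sum>c\<in>Cs. Ch t0 c * b c a)"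
proof -
  define Y where "Y t = (\<lambda>a. \<Sum>c\<in>Cs. Ch t c * b c a)" for t
  define HB where "HB c = H (b c)" for c
  define w where "w t c = (\<Sum>a\<in>M. H (Y t) a * cnj (b c a))" for t c
  define D where "D t c = - \<i> * w t c" for t c
  have HY: "H (Y t) = (\<lambda>a. \<Sum>c\<in>Cs. Ch t c * HB c a)" for t
    unfolding Y_def HB_def using H_sum[OF lin finC] .
  define E where "E t = (\<Sum>a\<in>M. cnj (Y t a) * (\<Sum>c\<in>Cs. Ch t c * HB c a))" for t
  have EE: "energy M H (Y t) = E t" for t
    unfolding energy_def inner_on_def E_def HY ..
  have dE: "(E has_vector_derivative 0) (at t within {t0..t1})" if t: "t \<in> {t0..t1}" for t
  proof -
    have dc: "((\<lambda>s. Ch s c) has_vector_derivative D t c) (at t within {t0..t1})" if "c \<in> Cs" for c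
      using der t that unfolding D_def w_def Y_def by auto
    define Yp where "Yp = (\<lambda>a. \<Sum>c\<in>Cs. D t c * b c a)"
    have "(E has_vector_derivative
       (\<Sum>a\<in>M. cnj (Y t a) * (\<Sum>c\<in>Cs. D t c * HB c a) + cnj (Yp a) * (\<Sum>c\<in>Cs. Ch t c * HB c a)))
        (at t within {t0..t1})"
      unfolding E_def Y_def Yp_def
      by (auto intro!: derivative_eq_intros dc simp: sum_distrib_right sum.distrib)
    moreover have "(\<Sum>a\<in>M. cnj (Y t a) * (\<Sum>c\<in>Cs. D t c * HB c a) + cnj (Yp a) * (\<Sum>c\<in>Cs. Ch t c * HB c a)) = 0"
    proof -
      have HYp: "H Yp = (\<lambda>a. \<Sum>c\<in>Cs. D t c * HB c a)"
        unfolding Yp_def HB_def using H_sum[OF lin finC] .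
      have t1: "(\<Sum>a\<in>M. cnj (Y t a) * (\<Sum>c\<in>Cs. D t c * HB c a)) = inner_on M (H (Y t)) Yp"
        using selfadj HYp unfolding inner_on_def by metis
      also have "\<dots> = (\<Sum>c\<in>Cs. D t c * cnj (w t c))"
        unfolding inner_on_def Yp_def w_def
        by (simp add: sum_distrib_left sum_distrib_right mult_ac sum.swap[of _ M])
      finally have t1: "(\<Sum>a\<in>M. cnj (Y t a) * (\<Sum>c\<in>Cs. D t c * HB c a)) = (\<Sum>c\<in>Cs. D t c * cnj (w t c))" .
      have t2: "(\<Sum>a\<in>M. cnj (Yp a) * (\<Sum>c\<in>Cs. Ch t c * HB c a)) = (\<Sum>c\<in>Cs. cnj (D t c) * w t c)"
        unfolding Yp_def w_def HY
        by (simp add: sum_distrib_left sum_distrib_right mult_ac sum.swap[of _ M])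
      have "(\<Sum>c\<in>Cs. D t c * cnj (w t c)) + (\<Sum>c\<in>Cs. cnj (D t c) * w t c) = 0"
        unfolding sum.distrib[symmetric] D_def by simp
      then show ?thesis
        by (simp only: sum.distrib t1 t2)
    qed
    ultimately show ?thesis by simp
  qed
  obtain k where "\<And>x. x \<in> {t0..t1} \<Longrightarrow> E x = k"
    using has_vector_derivative_zero_constant[of "{t0..t1}" E] dE by auto
  then have "E t1 = E t0" using t01 by simp
  then show ?thesis using EE unfolding Y_def by simp
qed


lemma energy_eqon:
  fixes H :: "(midx \<Rightarrow> complex) \<Rightarrow> (midx \<Rightarrow> complex)"
  assumes lin: "\<forall>Y Z. H (\<lambda>a. Y a + Z a) = (\<lambda>a. H Y a + H Z a)"
    and selfadj: "\<forall>Y Z. inner_on M (H Y) Z = inner_on M Y (H Z)"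
    and finM: "finite M"
    and eq: "\<forall>a\<in>M. Y a = Z a"
  shows "energy M H Y = energy M H Z"
proof -
  define D where "D = (\<lambda>a. Y a - Z a)"
  have "Y = (\<lambda>a. Z a + D a)" unfolding D_def by simp
  then have HY: "H Y = (\<lambda>a. H Z a + H D a)" using lin by metis
  have "inner_on M (H D) (H D) = inner_on M D (H (H D))" using selfadj by blast
  also have "\<dots> = 0" unfolding inner_on_def D_def using eq by simp
  finally have "(\<Sum>a\<in>M. cnj (H D a) * H D a) = 0" unfolding inner_on_def .
  moreover have cn: "complex_of_real ((cmod (H D a))\<^sup>2) = cnj (H D a) * H D a" for a
    by (metis complex_norm_square mult.commute)
  moreover have "complex_of_real (\<Sum>a\<in>M. (cmod (H D a))\<^sup>2) = (\<Sum>a\<in>M. cnj (H D a) * H D a)"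
    by (simp only: of_real_sum cn)
  ultimately have "complex_of_real (\<Sum>a\<in>M. (cmod (H D a))\<^sup>2) = 0" by simp
  then have "(\<Sum>a\<in>M. (cmod (H D a))\<^sup>2) = 0" by (simp only: of_real_eq_0_iff)
  then have "\<forall>a\<in>M. (cmod (H D a))\<^sup>2 = 0" using finM by (simp add: sum_nonneg_eq_0_iff)
  then have HD0: "\<forall>a\<in>M. H D a = 0" by simp
  show ?thesis unfolding energy_def inner_on_def HY using eq HD0 by simp
qed

theorem theorem6p3:
  fixes d :: nat and n :: "nat \<Rightarrow> nat" and tau :: tree and cs :: "tree list"
    and r :: "tree \<Rightarrow> nat" and Cn :: "tree \<Rightarrow> gten" and Ul :: "nat \<Rightarrow> nat \<Rightarrow> nat \<Rightarrow> complex"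
    and H :: "(midx \<Rightarrow> complex) \<Rightarrow> (midx \<Rightarrow> complex)"
    and t0 t1 :: real and C1 C0 :: gten and Xh :: "gten list" and rh :: "nat list"
  assumes tree: "wf_tree tau" "leaves tau = {1..d}" "tau = Node cs"
    and root_rank: "r tau = 1"
    and orthonormal: "\<forall>\<sigma>\<in>subtrees tau. \<sigma> \<noteq> tau \<longrightarrow> orth (MI n (leaves \<sigma>)) (X0 Cn Ul r \<sigma>) (r \<sigma>)"
    and full_rank: "\<forall>cs'. Node cs' \<in> subtrees tau \<longrightarrow> full_mlrank (Cn (Node cs')) (r (Node cs')) (map r cs')"
    and linear: "\<forall>Y Z. H (\<lambda>a. Y a + Z a) = (\<lambda>a. H Y a + H Z a)"
                "\<forall>c Y. H (\<lambda>a. c * Y a) = (\<lambda>a. c * H Y a)"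
    and selfadj: "\<forall>Y Z. inner_on (MI n {1..d}) (H Y) Z = inner_on (MI n {1..d}) Y (H Z)"
    and step: "t0 < t1"
    and run: "integ n Cn Ul r t0 t1 tau (Cn tau) (\<lambda>t Y k a. - \<i> * H (Y 0) a) C1 C0 Xh rh"
  shows "energy (MI n {1..d}) H (comb C1 Xh rh (map leaves cs) 0)
       = energy (MI n {1..d}) H (X0 Cn Ul r tau 0)"
proof -
  define F where "F = (\<lambda>(t::real) (Y::gten) (k::nat) a. - \<i> * H (Y 0) a)"
  define M where "M = MI n {1..d}"
  define Ls where "Ls = map leaves cs"
  have finM: "finite M" unfolding M_def by (rule finite_MI) simp
  have LsU: "\<Union>(set Ls) = {1..d}" using tree(2,3) unfolding Ls_def by simp
  have mf: "modefr (Cn tau) (r tau) (map r cs)"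
    using full_rank subtrees_self[of tau] tree(3) by (auto intro: full_modefr)
  have fr': "\<forall>cs'. Node cs' \<in> subtrees tau \<longrightarrow> full_mlrank (Cn (Node cs')) (r (Node cs')) (map r cs')"
    using full_rank .
  have MI: "length Xh = length cs \<and> length rh = length cs \<and>
      C0 = cmult (Cn tau) (map (\<lambda>i. mhat (MI n (leaves (cs!i))) (Xh!i) (X0 Cn Ul r (cs!i))) [0..<length cs]) (map r cs) \<and>
      (\<forall>i<length cs. orth (MI n (leaves (cs!i))) (Xh!i) (rh!i) \<and>
         (\<forall>c<r (cs!i). \<exists>y. \<forall>b\<in>MI n (leaves (cs!i)). X0 Cn Ul r (cs!i) c b = (\<Sum>c'<rh!i. y c' * (Xh!i) c' b)))"
    by (rule main_ind[OF run, unfolded Pind_def, rule_format, OF tree(3) tree(1) fr'[rule_format] mf])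
  then have lenX: "length Xh = length cs" and lenr: "length rh = length cs"
    and C0eq: "C0 = cmult (Cn tau) (map (\<lambda>i. mhat (MI n (leaves (cs!i))) (Xh!i) (X0 Cn Ul r (cs!i))) [0..<length cs]) (map r cs)"
    and orthX: "\<forall>i<length cs. orth (MI n (leaves (cs!i))) (Xh!i) (rh!i)"
    and spX: "\<forall>i<length cs. \<forall>c<r (cs!i). \<exists>y. \<forall>b\<in>MI n (leaves (cs!i)). X0 Cn Ul r (cs!i) c b = (\<Sum>c'<rh!i. y c' * (Xh!i) c' b)"
    by auto
  obtain Ch where sol: "solves Ch (\<lambda>t Cc. proj n (F t (comb Cc Xh rh Ls)) Xh Ls)
        t0 t1 C0 (r (Node cs)) (MI (\<lambda>i. rh!i) {..<length cs})" and C1: "C1 = Ch t1"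
    using run unfolding tree(3) F_def[symmetric] Ls_def
    by (rule integ.cases) blast
  define Cs where "Cs = MI (\<lambda>i. rh!i) {..<length cs}"
  define b where "b c a = (\<Prod>i<length cs. (Xh!i) (c i) (restrict a (Ls!i)))" for c a
  have finC: "finite Cs" unfolding Cs_def by (rule finite_MI) simp
  have combY: "comb Cc Xh rh Ls 0 = (\<lambda>a. \<Sum>c\<in>Cs. Cc 0 c * b c a)" for Cc
    unfolding comb_def Cs_def b_def lenX ..
  have r1: "r (Node cs) = 1" using root_rank tree(3) by simp
  have der: "\<forall>t\<in>{t0..t1}. \<forall>c\<in>Cs. ((\<lambda>s. Ch s 0 c) has_vector_derivative
          (- \<i> * (\<Sum>a\<in>M. H (\<lambda>a'. \<Sum>c'\<in>Cs. Ch t 0 c' * b c' a') a * cnj (b c a)))) (at t within {t0..t1})"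
  proof (intro ballI)
    fix t c assume t: "t \<in> {t0..t1}" and c: "c \<in> Cs"
    have "((\<lambda>s. Ch s 0 c) has_vector_derivative (proj n (F t (comb (Ch t) Xh rh Ls)) Xh Ls) 0 c) (at t within {t0..t1})"
      using sol t c r1 unfolding solves_def Cs_def by auto
    moreover have "(proj n (F t (comb (Ch t) Xh rh Ls)) Xh Ls) 0 c
        = - \<i> * (\<Sum>a\<in>M. H (\<lambda>a'. \<Sum>c'\<in>Cs. Ch t 0 c' * b c' a') a * cnj (b c a))"
      unfolding proj_def F_def combY LsU M_def b_def lenX
      by (simp add: sum_distrib_left mult_ac)
    ultimately show "((\<lambda>s. Ch s 0 c) has_vector_derivative
          (- \<i> * (\<Sum>a\<in>M. H (\<lambda>a'. \<Sum>c'\<in>Cs. Ch t 0 c' * b c' a') a * cnj (b c a)))) (at t within {t0..t1})"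
      by simp
  qed
  have E1: "energy M H (\<lambda>a. \<Sum>c\<in>Cs. Ch t1 0 c * b c a) = energy M H (\<lambda>a. \<Sum>c\<in>Cs. Ch t0 0 c * b c a)"
    using energy_const[of H M, OF linear selfadj[folded M_def] finM finC _ der] step by simp
  have init: "(\<lambda>a. \<Sum>c\<in>Cs. Ch t0 0 c * b c a) = comb C0 Xh rh Ls 0"
    unfolding combY using sol r1 unfolding solves_def Cs_def by (auto intro!: sum.cong)
  have proj0: "\<forall>a\<in>M. comb C0 Xh rh Ls 0 a = X0 Cn Ul r tau 0 a"
  proof
    fix a assume a: "a \<in> M"
    have mapeq: "map (\<lambda>i. mhat (MI n (leaves (cs!i))) (Xh!i) (X0 Cn Ul r (cs!i))) [0..<length cs]
        = map (\<lambda>i. mhat (MI n (Ls!i)) (Xh!i) (map (X0 Cn Ul r) cs ! i)) [0..<length cs]"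
      unfolding Ls_def by (intro map_cong refl) simp
    have "comb C0 Xh rh Ls 0 a = comb (Cn tau) (map (X0 Cn Ul r) cs) (map r cs) Ls 0 a"
      unfolding C0eq mapeq
      by (rule comb_cmult_proj[where m="length cs"])
         (use lenX lenr orthX spX a LsU in \<open>auto simp: Ls_def M_def\<close>)
    also have "\<dots> = X0 Cn Ul r tau 0 a" using tree(3) unfolding Ls_def by simp
    finally show "comb C0 Xh rh Ls 0 a = X0 Cn Ul r tau 0 a" .
  qed
  have "energy M H (comb C1 Xh rh Ls 0) = energy M H (comb C0 Xh rh Ls 0)"
    using E1 init unfolding C1 combY by simp
  also have "\<dots> = energy M H (X0 Cn Ul r tau 0)"
    by (rule energy_eqon[OF linear(1) selfadj[folded M_def] finM proj0])
  finally show ?thesis unfolding M_def Ls_def .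
qed


end
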